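(* Let $(\mathfrak g,\langle\cdot,\cdot\rangle)$ be a finite-dimensional real Lie algebra with a non-degenerate symmetric bilinear form which is ad-invariant, i.e. $\langle[X,Y],Z\rangle=-\langle Y,[X,Z]\rangle$ for all $X,Y,Z$, and which is flat, meaning the connection $\nabla_XY=\tfrac12[X,Y]$ has zero curvature (equivalently $\mathfrak g$ is nilpotent of class at most two). Then there exist an abelian Lie algebra $\mathfrak z$ with non-degenerate scalar product, a vector space $\mathfrak a$ and an alternating three-form $F\in\Lambda^3\mathfrak a^*$ such that $(\mathfrak g,\langle\cdot,\cdot\rangle)$ is isomorphic, as a metric Lie algebra, to the orthogonal direct product $(\mathfrak z,\langle\cdot,\cdot\rangle)\oplus(\mathfrak t_{\mathfrak a,F},\langle\cdot,\cdot\rangle_o)$.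
   Context: For a vector space $\mathfrak a$ and $F\in\Lambda^3\mathfrak a^*$, define $\omega_F:\mathfrak a\times\mathfrak a\to\mathfrak a^*$ by $\omega_F(u,v)(w)=F(u,v,w)$. The Lie algebra $\mathfrak t_{\mathfrak a,F}$ is the vector space $\mathfrak a^*\oplus\mathfrak a$ with bracket $[(\lambda,u),(\lambda',u')]=(\omega_F(u,u'),0)$. The scalar product $\langle\cdot,\cdot\rangle_o$ on $\mathfrak a^*\oplus\mathfrak a$ (of signature $(m,m)$, $m=\dim\mathfrak a$) is $\langle(\lambda,u),(\lambda',u')\rangle_o=\lambda(u')+\lambda'(u)$, so that $\mathfrak a$ and $\mathfrak a^*$ are totally isotropic. *)

theory Defs
  imports "HOL-Analysis.Analysis"
begin

text \<open>A finite-dimensional real vector space is modelled by a type of class euclidean_space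
(its inner product plays no role). The Lie bracket and the scalar product are explicit.\<close>

definition lie_algebra :: "('g::real_vector \<Rightarrow> 'g \<Rightarrow> 'g) \<Rightarrow> bool" where
  "lie_algebra br \<longleftrightarrow> bilinear br \<and> (\<forall>x. br x x = 0) \<and>
     (\<forall>x y z. br x (br y z) + br y (br z x) + br z (br x y) = 0)"

definition nondeg_sym_form :: "('g::real_vector \<Rightarrow> 'g \<Rightarrow> real) \<Rightarrow> bool" where
  "nondeg_sym_form B \<longleftrightarrow> bilinear B \<and> (\<forall>x y. B x y = B y x) \<and>
     (\<forall>x. (\<forall>y. B x y = 0) \<longrightarrow> x = 0)"

definition ad_invariant :: "('g \<Rightarrow> 'g \<Rightarrow> 'g) \<Rightarrow> ('g \<Rightarrow> 'g \<Rightarrow> real) \<Rightarrow> bool" where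
  "ad_invariant br B \<longleftrightarrow> (\<forall>x y z. B (br x y) z = - B y (br x z))"

definition half_conn :: "('g::real_vector \<Rightarrow> 'g \<Rightarrow> 'g) \<Rightarrow> 'g \<Rightarrow> 'g \<Rightarrow> 'g" where
  "half_conn br x y = (1/2) *\<^sub>R br x y"

definition curvature :: "('g::real_vector \<Rightarrow> 'g \<Rightarrow> 'g) \<Rightarrow> 'g \<Rightarrow> 'g \<Rightarrow> 'g \<Rightarrow> 'g" where
  "curvature br x y z =
     half_conn br x (half_conn br y z) - half_conn br y (half_conn br x z)
     - half_conn br (br x y) z"

definition flat :: "('g::real_vector \<Rightarrow> 'g \<Rightarrow> 'g) \<Rightarrow> bool" where
  "flat br \<longleftrightarrow> (\<forall>x y z. curvature br x y z = 0)"

text \<open>R^n is modelled as functions nat => real vanishing outside {0..<n}.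
  z = R^p with the scalar product given by a symmetric matrix S (nondegenerate),
  a = R^m, a* = R^m via the dual basis, so lambda(u) = sum_i lambda_i u_i.\<close>

definition vec_on :: "nat \<Rightarrow> (nat \<Rightarrow> real) set" where
  "vec_on n = {v. \<forall>i\<ge>n. v i = 0}"

definition sform :: "nat \<Rightarrow> (nat \<Rightarrow> nat \<Rightarrow> real) \<Rightarrow> (nat \<Rightarrow> real) \<Rightarrow> (nat \<Rightarrow> real) \<Rightarrow> real" where
  "sform p S v w = (\<Sum>i<p. \<Sum>j<p. S i j * v i * w j)"

definition valid_zform :: "nat \<Rightarrow> (nat \<Rightarrow> nat \<Rightarrow> real) \<Rightarrow> bool" where
  "valid_zform p S \<longleftrightarrow> (\<forall>i j. S i j = S j i) \<and>
     (\<forall>v\<in>vec_on p. (\<forall>w\<in>vec_on p. sform p S v w = 0) \<longrightarrow> v = (\<lambda>_. 0))"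

definition three_form :: "nat \<Rightarrow> (nat \<Rightarrow> nat \<Rightarrow> nat \<Rightarrow> real) \<Rightarrow> (nat \<Rightarrow> real) \<Rightarrow> (nat \<Rightarrow> real) \<Rightarrow> (nat \<Rightarrow> real) \<Rightarrow> real" where
  "three_form m C u v w = (\<Sum>i<m. \<Sum>j<m. \<Sum>k<m. C i j k * u i * v j * w k)"

definition alternating3 :: "(nat \<Rightarrow> nat \<Rightarrow> nat \<Rightarrow> real) \<Rightarrow> bool" where
  "alternating3 C \<longleftrightarrow> (\<forall>i j k. C i j k = - C j i k \<and> C i j k = - C i k j)"

text \<open>omega_F(u,v) as an element of a*, in dual coordinates: component k is F(u,v,e_k).\<close>
definition omegaF :: "nat \<Rightarrow> (nat \<Rightarrow> nat \<Rightarrow> nat \<Rightarrow> real) \<Rightarrow> (nat \<Rightarrow> real) \<Rightarrow> (nat \<Rightarrow> real) \<Rightarrow> (nat \<Rightarrow> real)" where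
  "omegaF m C u v = (\<lambda>k. if k < m then three_form m C u v (\<lambda>l. if l = k then 1 else 0) else 0)"

type_synonym tvec = "(nat \<Rightarrow> real) \<times> (nat \<Rightarrow> real) \<times> (nat \<Rightarrow> real)"

text \<open>Carrier of z (+) (a* (+) a); a triple (z, lambda, u).\<close>
definition tcarrier :: "nat \<Rightarrow> nat \<Rightarrow> tvec set" where
  "tcarrier p m = {(z, l, u). z \<in> vec_on p \<and> l \<in> vec_on m \<and> u \<in> vec_on m}"

definition tbracket :: "nat \<Rightarrow> (nat \<Rightarrow> nat \<Rightarrow> nat \<Rightarrow> real) \<Rightarrow> tvec \<Rightarrow> tvec \<Rightarrow> tvec" where
  "tbracket m C X Y = (case X of (z, l, u) \<Rightarrow> case Y of (z', l', u') \<Rightarrow>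
      ((\<lambda>_. 0), omegaF m C u u', (\<lambda>_. 0)))"

definition tform :: "nat \<Rightarrow> nat \<Rightarrow> (nat \<Rightarrow> nat \<Rightarrow> real) \<Rightarrow> tvec \<Rightarrow> tvec \<Rightarrow> real" where
  "tform p m S X Y = (case X of (z, l, u) \<Rightarrow> case Y of (z', l', u') \<Rightarrow>
      sform p S z z' + (\<Sum>i<m. l i * u' i + l' i * u i))"

definition tlinear :: "('g::real_vector \<Rightarrow> tvec) \<Rightarrow> bool" where
  "tlinear \<phi> \<longleftrightarrow> (\<forall>i. linear (\<lambda>x. fst (\<phi> x) i) \<and> linear (\<lambda>x. fst (snd (\<phi> x)) i)
                        \<and> linear (\<lambda>x. snd (snd (\<phi> x)) i))"

definition metric_lie_iso ::
  "('g::real_vector \<Rightarrow> 'g \<Rightarrow> 'g) \<Rightarrow> ('g \<Rightarrow> 'g \<Rightarrow> real) \<Rightarrow> nat \<Rightarrow> nat \<Rightarrow>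
   (nat \<Rightarrow> nat \<Rightarrow> real) \<Rightarrow> (nat \<Rightarrow> nat \<Rightarrow> nat \<Rightarrow> real) \<Rightarrow> ('g \<Rightarrow> tvec) \<Rightarrow> bool" where
  "metric_lie_iso br B p m S C \<phi> \<longleftrightarrow>
     tlinear \<phi> \<and> bij_betw \<phi> UNIV (tcarrier p m) \<and>
     (\<forall>x y. \<phi> (br x y) = tbracket m C (\<phi> x) (\<phi> y)) \<and>
     (\<forall>x y. B x y = tform p m S (\<phi> x) (\<phi> y))"

end

theory Submission
  imports Defs
begin

locale mla =
  fixes br :: "'g::euclidean_space \<Rightarrow> 'g \<Rightarrow> 'g" and B :: "'g \<Rightarrow> 'g \<Rightarrow> real"
  assumes brb: "bilinear br" and alt: "\<And>x. br x x = 0" and Bb: "bilinear B"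
    and Bsym: "\<And>x y. B x y = B y x" and Bnd: "\<And>x. (\<forall>y. B x y = 0) \<Longrightarrow> x = 0"
    and inv: "\<And>x y z. B (br x y) z = - B y (br x z)"
    and nil2: "\<And>a b c. br (br a b) c = 0"
begin

lemmas Bs = bilinear_ladd[OF Bb] bilinear_radd[OF Bb] bilinear_lmul[OF Bb] bilinear_rmul[OF Bb]
  bilinear_lsub[OF Bb] bilinear_rsub[OF Bb] bilinear_lzero[OF Bb] bilinear_rzero[OF Bb]
  bilinear_lneg[OF Bb] bilinear_rneg[OF Bb]

lemmas brs = bilinear_ladd[OF brb] bilinear_radd[OF brb] bilinear_lmul[OF brb] bilinear_rmul[OF brb]
  bilinear_lsub[OF brb] bilinear_rsub[OF brb] bilinear_lzero[OF brb] bilinear_rzero[OF brb]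
  bilinear_lneg[OF brb] bilinear_rneg[OF brb]

lemma antisym: "br a b = - br b a"
proof -
  have "br (a+b) (a+b) = (br a a + br a b) + (br b a + br b b)"
    unfolding bilinear_ladd[OF brb] bilinear_radd[OF brb] by (simp only: add_ac)
  then have "br a b + br b a = 0" using alt[of a] alt[of b] alt[of "a+b"] by simp
  then show ?thesis by (simp add: eq_neg_iff_add_eq_0)
qed

definition cen :: "'g \<Rightarrow> bool" where "cen y \<longleftrightarrow> (\<forall>a. br a y = 0)"

lemma cenD: "cen y \<Longrightarrow> br a y = 0" "cen y \<Longrightarrow> br y a = 0"
  unfolding cen_def by (metis antisym neg_equal_0_iff_equal)+

lemma subspace_cen: "subspace {y. cen y}"
  unfolding subspace_def cen_def by (simp add: brs)

lemma orth_span: assumes "\<And>s. s \<in> S \<Longrightarrow> B s v = 0" "x \<in> span S" shows "B x v = 0"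
proof -
  have "subspace {y. B y v = 0}" unfolding subspace_def by (simp add: Bs)
  then have "span S \<subseteq> {y. B y v = 0}" using assms(1) by (intro span_minimal) auto
  then show ?thesis using assms(2) by auto
qed

definition good :: "nat \<Rightarrow> (nat \<Rightarrow> 'g) \<Rightarrow> nat \<Rightarrow> (nat \<Rightarrow> 'g) \<Rightarrow> (nat \<Rightarrow> 'g) \<Rightarrow> bool" where
  "good p zs m ls us \<longleftrightarrow> (\<forall>i<p. cen (zs i) \<and> B (zs i) (zs i) \<noteq> 0) \<and>
     (\<forall>i<p. \<forall>j<p. i \<noteq> j \<longrightarrow> B (zs i) (zs j) = 0) \<and> (\<forall>k<m. cen (ls k)) \<and>
     (\<forall>i<m. \<forall>j<m. B (ls i) (ls j) = 0 \<and> B (us i) (us j) = 0 \<and> B (ls i) (us j) = (if i = j then 1 else 0)) \<and>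
     (\<forall>i<p. \<forall>k<m. B (zs i) (ls k) = 0 \<and> B (zs i) (us k) = 0)"

definition gens where "gens p zs m ls us = zs ` {..<p} \<union> ls ` {..<m} \<union> us ` {..<m}"

lemma good_z:
  assumes "good p zs m ls us" "\<forall>i<p. zs i \<in> V'" "\<forall>k<m. ls k \<in> V' \<and> us k \<in> V'"
    "cen x" "B x x \<noteq> 0" "\<And>v. v \<in> V' \<Longrightarrow> B x v = 0"
  shows "good (Suc p) (zs(p:=x)) m ls us"
proof -
  have "\<And>v. v \<in> V' \<Longrightarrow> B v x = 0" using assms(6) Bsym by metis
  then show ?thesis using assms unfolding good_def by (auto simp: less_Suc_eq)
qed

lemma good_lu:
  assumes "good p zs m ls us" "\<forall>i<p. zs i \<in> V'" "\<forall>k<m. ls k \<in> V' \<and> us k \<in> V'"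
    "cen l" "B l l = 0" "B u u = 0" "B l u = 1" "\<And>v. v \<in> V' \<Longrightarrow> B l v = 0" "\<And>v. v \<in> V' \<Longrightarrow> B u v = 0"
  shows "good p zs (Suc m) (ls(m:=l)) (us(m:=u))"
proof -
  have "\<And>v. v \<in> V' \<Longrightarrow> B v l = 0" "\<And>v. v \<in> V' \<Longrightarrow> B v u = 0" "B u l = 1"
    using assms(7,8,9) Bsym by metis+
  then show ?thesis using assms unfolding good_def by (auto simp: less_Suc_eq)
qed

lemma gens_z: "gens p zs m ls us \<subseteq> gens (Suc p) (zs(p:=x)) m ls us"
   "x \<in> gens (Suc p) (zs(p:=x)) m ls us"
  unfolding gens_def by (auto simp: lessThan_Suc image_iff)

lemma gens_lu: "gens p zs m ls us \<subseteq> gens p zs (Suc m) (ls(m:=l)) (us(m:=u))"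
   "l \<in> gens p zs (Suc m) (ls(m:=l)) (us(m:=u))" "u \<in> gens p zs (Suc m) (ls(m:=l)) (us(m:=u))"
  unfolding gens_def by (auto simp: lessThan_Suc image_iff)

lemma decomp:
  assumes "subspace V" "\<And>x. x \<in> V \<Longrightarrow> x \<noteq> 0 \<Longrightarrow> \<exists>y\<in>V. B x y \<noteq> 0"
    "subspace C" "\<And>c. c \<in> C \<Longrightarrow> cen c" "\<And>c v. c \<in> C \<Longrightarrow> v \<in> V \<Longrightarrow> B c v = 0"
    "\<And>y. cen y \<Longrightarrow> \<exists>v\<in>V. \<exists>c\<in>C. y = v + c"
  shows "\<exists>p zs m ls us. good p zs m ls us \<and> (\<forall>i<p. zs i \<in> V) \<and> (\<forall>k<m. ls k \<in> V \<and> us k \<in> V)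
            \<and> V \<subseteq> span (gens p zs m ls us)"
  using assms
proof (induction "dim V" arbitrary: V C rule: less_induct)
  case less
  note sV = less.prems(1) and ndV = less.prems(2) and sC = less.prems(3) and cC = less.prems(4)
    and oC = less.prems(5) and ZC = less.prems(6)
  show ?case
  proof (cases "\<exists>x\<in>V. cen x \<and> B x x \<noteq> 0")
    case True
    then obtain x where x: "x \<in> V" "cen x" "B x x \<noteq> 0" by blast
    define V' where "V' = {y\<in>V. B x y = 0}"
    define C' where "C' = span (insert x C)"
    have sV': "subspace V'" using sV unfolding V'_def subspace_def by (simp add: Bs)
    have proj: "v - (B x v / B x x) *\<^sub>R x \<in> V'" if "v \<in> V" for v
      using that x sV unfolding V'_def by (simp add: Bs subspace_diff subspace_scale)
    have ndV': "\<exists>y\<in>V'. B w y \<noteq> 0" if "w \<in> V'" "w \<noteq> 0" for w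
    proof -
      from that ndV obtain y where y: "y \<in> V" "B w y \<noteq> 0" unfolding V'_def by blast
      have "B w x = 0" using that Bsym unfolding V'_def by auto
      then have "B w (y - (B x y / B x x) *\<^sub>R x) = B w y" by (simp add: Bs)
      then show ?thesis using proj[OF y(1)] y(2) by metis
    qed
    have sC': "subspace C'" unfolding C'_def by simp
    have cC': "cen c" if "c \<in> C'" for c
    proof -
      have "C' \<subseteq> {y. cen y}" unfolding C'_def using x cC by (intro span_minimal subspace_cen) auto
      then show ?thesis using that by auto
    qed
    have oC': "B c v = 0" if "c \<in> C'" "v \<in> V'" for c v
      using that(1) unfolding C'_def
      by (rule orth_span[rotated]) (use that(2) oC V'_def in auto)
    have ZC': "\<exists>v\<in>V'. \<exists>c\<in>C'. y = v + c" if cy: "cen y" for y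
    proof -
      obtain v c where vc: "v \<in> V" "c \<in> C" "y = v + c" using ZC[OF cy] by blast
      have "(B x v / B x x) *\<^sub>R x + c \<in> C'" unfolding C'_def
        using vc(2) by (intro span_add span_scale span_base) auto
      moreover have "y = (v - (B x v / B x x) *\<^sub>R x) + ((B x v / B x x) *\<^sub>R x + c)" using vc by simp
      ultimately show ?thesis using proj[OF vc(1)] by blast
    qed
    have "V' \<subset> V" using x unfolding V'_def by auto
    then have "dim V' < dim V" using sV sV' by (metis dim_psubset span_eq_iff)
    from less.hyps[OF this sV' ndV' sC' cC' oC' ZC']
    obtain p zs m ls us where IH: "good p zs m ls us" "\<forall>i<p. zs i \<in> V'" "\<forall>k<m. ls k \<in> V' \<and> us k \<in> V'"
      "V' \<subseteq> span (gens p zs m ls us)" by blast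
    have g: "good (Suc p) (zs(p:=x)) m ls us"
      using good_z[OF IH(1-3) x(2,3)] V'_def by auto
    have "V \<subseteq> span (gens (Suc p) (zs(p:=x)) m ls us)"
    proof
      fix v assume v: "v \<in> V"
      have "v - (B x v / B x x) *\<^sub>R x \<in> span (gens (Suc p) (zs(p:=x)) m ls us)"
        using proj[OF v] IH(4) span_mono[OF gens_z(1)] by blast
      moreover have "(B x v / B x x) *\<^sub>R x \<in> span (gens (Suc p) (zs(p:=x)) m ls us)"
        using gens_z(2) by (intro span_scale span_base)
      ultimately have "(v - (B x v / B x x) *\<^sub>R x) + (B x v / B x x) *\<^sub>R x \<in> span (gens (Suc p) (zs(p:=x)) m ls us)"
        by (rule span_add)
      then show "v \<in> span (gens (Suc p) (zs(p:=x)) m ls us)" by simp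
    qed
    moreover have "\<forall>i<Suc p. (zs(p:=x)) i \<in> V" using IH(2) x(1) V'_def by (auto simp: less_Suc_eq)
    moreover have "\<forall>k<m. ls k \<in> V \<and> us k \<in> V" using IH(3) V'_def by auto
    ultimately show ?thesis using g by blast
  next
    case False
    then have iso: "B x x = 0" if "x \<in> V" "cen x" for x using that by blast
    have iso2: "B x y = 0" if "x \<in> V" "cen x" "y \<in> V" "cen y" for x y
    proof -
      have a: "x + y \<in> V" using that sV by (auto simp: subspace_add)
      have b: "cen (x+y)" using that subspace_add[OF subspace_cen, of x y] by simp
      from iso[OF a b] iso[OF that(1,2)] iso[OF that(3,4)]
      show ?thesis by (simp add: Bs Bsym[of y x])
    qed
    show ?thesis
    proof (cases "\<exists>l\<in>V. cen l \<and> l \<noteq> 0")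
      case True
      then obtain l where l: "l \<in> V" "cen l" "l \<noteq> 0" by blast
      obtain w where w: "w \<in> V" "B l w \<noteq> 0" using ndV[OF l(1,3)] by blast
      define u0 where "u0 = (1 / B l w) *\<^sub>R w"
      define u where "u = u0 - (B u0 u0 / 2) *\<^sub>R l"
      have ll: "B l l = 0" using iso[OF l(1,2)] .
      have lu0: "B l u0 = 1" using w unfolding u0_def by (simp add: Bs)
      have lu: "B l u = 1" unfolding u_def by (simp add: Bs lu0 ll)
      have ul: "B u l = 1" using lu Bsym by metis
      have uu: "B u u = 0" unfolding u_def by (simp add: Bs lu0 ll Bsym[of u0 l])
      have uV: "u \<in> V" unfolding u_def u0_def using w l sV by (simp add: subspace_diff subspace_scale)
      define V' where "V' = {y\<in>V. B l y = 0 \<and> B u y = 0}"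
      define C' where "C' = span (insert l C)"
      have sV': "subspace V'" using sV unfolding V'_def subspace_def by (simp add: Bs)
      have proj: "v - B v u *\<^sub>R l - B v l *\<^sub>R u \<in> V'" if "v \<in> V" for v
        using that l uV sV unfolding V'_def
        by (simp add: Bs subspace_diff subspace_scale ll lu ul uu Bsym[of l v] Bsym[of u v])
      have ndV': "\<exists>y\<in>V'. B z y \<noteq> 0" if "z \<in> V'" "z \<noteq> 0" for z
      proof -
        from that ndV obtain y where y: "y \<in> V" "B z y \<noteq> 0" unfolding V'_def by blast
        have "B z l = 0" "B z u = 0" using that Bsym unfolding V'_def by auto
        then have "B z (y - B y u *\<^sub>R l - B y l *\<^sub>R u) = B z y" by (simp add: Bs)
        then show ?thesis using proj[OF y(1)] y(2) by metis
      qed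
      have sC': "subspace C'" unfolding C'_def by simp
      have cC': "cen c" if "c \<in> C'" for c
      proof -
        have "C' \<subseteq> {y. cen y}" unfolding C'_def using l cC by (intro span_minimal subspace_cen) auto
        then show ?thesis using that by auto
      qed
      have oC': "B c v = 0" if "c \<in> C'" "v \<in> V'" for c v
        using that(1) unfolding C'_def
        by (rule orth_span[rotated]) (use that(2) oC V'_def in auto)
      have ZC': "\<exists>v\<in>V'. \<exists>c\<in>C'. y = v + c" if cy: "cen y" for y
      proof -
        obtain v c where vc: "v \<in> V" "c \<in> C" "y = v + c" using ZC[OF cy] by blast
        have "cen v"
        proof -
          have "y - c \<in> {y. cen y}" using cy cC[OF vc(2)] subspace_cen by (intro subspace_diff) auto
          then show ?thesis using vc by simp
        qed
        then have vl: "B v l = 0" using iso2[OF vc(1) _ l(1,2)] by simp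
        have "B v u *\<^sub>R l + c \<in> C'" unfolding C'_def
          using vc(2) by (intro span_add span_scale span_base) auto
        moreover have "y = (v - B v u *\<^sub>R l - B v l *\<^sub>R u) + (B v u *\<^sub>R l + c)" using vc vl by simp
        ultimately show ?thesis using proj[OF vc(1)] by blast
      qed
      have "V' \<subset> V"
      proof -
        have "V' \<subseteq> V" unfolding V'_def by blast
        moreover have "l \<in> V" "l \<notin> V'" using l(1) ul unfolding V'_def by simp_all
        ultimately show ?thesis by blast
      qed
      then have "dim V' < dim V" using sV sV' by (metis dim_psubset span_eq_iff)
      from less.hyps[OF this sV' ndV' sC' cC' oC' ZC']
      obtain p zs m ls us where IH: "good p zs m ls us" "\<forall>i<p. zs i \<in> V'" "\<forall>k<m. ls k \<in> V' \<and> us k \<in> V'"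
        "V' \<subseteq> span (gens p zs m ls us)" by blast
      have "\<And>v. v \<in> V' \<Longrightarrow> B l v = 0" "\<And>v. v \<in> V' \<Longrightarrow> B u v = 0" unfolding V'_def by auto
      then have g: "good p zs (Suc m) (ls(m:=l)) (us(m:=u))"
        by (rule good_lu[OF IH(1-3) l(2) ll uu lu])
      let ?G = "span (gens p zs (Suc m) (ls(m:=l)) (us(m:=u)))"
      have "V \<subseteq> ?G"
      proof
        fix v assume v: "v \<in> V"
        have "v - B v u *\<^sub>R l - B v l *\<^sub>R u \<in> ?G"
          using proj[OF v] IH(4) span_mono[OF gens_lu(1)] by blast
        moreover have "B v u *\<^sub>R l \<in> ?G" using gens_lu(2) by (intro span_scale span_base)
        moreover have "B v l *\<^sub>R u \<in> ?G" using gens_lu(3) by (intro span_scale span_base)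
        ultimately have "(v - B v u *\<^sub>R l - B v l *\<^sub>R u) + B v u *\<^sub>R l + B v l *\<^sub>R u \<in> ?G"
          by (intro span_add)
        then show "v \<in> ?G" by simp
      qed
      moreover have "\<forall>i<p. zs i \<in> V" using IH(2) V'_def by auto
      moreover have "\<forall>k<Suc m. (ls(m:=l)) k \<in> V \<and> (us(m:=u)) k \<in> V"
        using IH(3) l(1) uV V'_def by (auto simp: less_Suc_eq)
      ultimately show ?thesis using g by blast
    next
      case False
      then have VZ: "v = 0" if "v \<in> V" "cen v" for v using that by blast
      have ZsC: "y \<in> C" if cy: "cen y" for y
      proof -
        obtain v c where vc: "v \<in> V" "c \<in> C" "y = v + c" using ZC[OF cy] by blast
        have "y - c \<in> {y. cen y}" using cy cC[OF vc(2)] subspace_cen by (intro subspace_diff) auto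
        then have "v = 0" using vc VZ[OF vc(1)] by simp
        then show ?thesis using vc by simp
      qed
      have "V \<subseteq> {0}"
      proof
        fix v assume v: "v \<in> V"
        have "cen v" unfolding cen_def
        proof
          fix a
          have "\<forall>b. B (br a v) b = 0"
          proof
            fix b
            have "cen (br a b)" unfolding cen_def using nil2 antisym by (metis neg_equal_0_iff_equal)
            then have "B (br a b) v = 0" using oC[OF ZsC v] by simp
            then show "B (br a v) b = 0" using inv[of a v b] Bsym by simp
          qed
          then show "br a v = 0" using Bnd by blast
        qed
        then show "v \<in> {0}" using VZ[OF v] by simp
      qed
      then have "V \<subseteq> span (gens 0 zs 0 ls us)" for zs ls us using span_zero by auto
      moreover have "good 0 zs 0 ls us" for zs ls us unfolding good_def by simp
      ultimately show ?thesis by blast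
    qed
  qed
qed

lemma basis_exists: "\<exists>p zs m ls us. good p zs m ls us \<and> span (gens p zs m ls us) = UNIV"
proof -
  have "\<exists>p zs m ls us. good p zs m ls us \<and> (\<forall>i<p. zs i \<in> UNIV) \<and> (\<forall>k<m. ls k \<in> UNIV \<and> us k \<in> UNIV)
            \<and> UNIV \<subseteq> span (gens p zs m ls us)"
  proof (rule decomp)
    show "\<exists>y\<in>UNIV. B x y \<noteq> 0" if "x \<noteq> 0" for x using that Bnd by blast
    show "subspace (span {})" by simp
    show "cen c" if "c \<in> span {}" for c using that unfolding cen_def by (simp add: brs)
    show "\<exists>v\<in>UNIV. \<exists>c\<in>span {}. y = v + c" for y by auto
  qed (auto simp: Bs)
  then show ?thesis by (metis top.extremum_uniqueI)
qed

lemma Bsuml: "B (sum f A) y = (\<Sum>a\<in>A. B (f a) y)"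
  by (induct A rule: infinite_finite_induct) (simp_all add: Bs)

lemma sum_single: "finite A \<Longrightarrow> j \<in> A \<Longrightarrow> (\<And>i. i \<in> A \<Longrightarrow> i \<noteq> j \<Longrightarrow> f i = 0) \<Longrightarrow> sum f A = f j"
  by (subst sum.remove[of A j]) (auto intro: sum.neutral)

end

lemma antisym0: assumes "bilinear br" "\<And>x. br x x = 0" shows "br a b = - br b a"
proof -
  have "br (a+b) (a+b) = (br a a + br a b) + (br b a + br b b)"
    unfolding bilinear_ladd[OF assms(1)] bilinear_radd[OF assms(1)] by (simp only: add_ac)
  then have "br a b + br b a = 0" using assms(2)[of a] assms(2)[of b] assms(2)[of "a+b"] by simp
  then show ?thesis by (simp add: eq_neg_iff_add_eq_0)
qed

locale mlab = mla br B for br :: "'g::euclidean_space \<Rightarrow> 'g \<Rightarrow> 'g" and B +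
  fixes p zs m ls us
  assumes gd: "good p zs m ls us" and sp: "span (gens p zs m ls us) = UNIV"
begin

definition cz where "cz i = B (zs i) (zs i)"
definition phi :: "'g \<Rightarrow> tvec" where
  "phi x = ((\<lambda>i. if i < p then B x (zs i) / cz i else 0), (\<lambda>k. if k < m then B x (us k) else 0),
            (\<lambda>k. if k < m then B x (ls k) else 0))"
definition psi :: "tvec \<Rightarrow> 'g" where
  "psi t = (\<Sum>i<p. fst t i *\<^sub>R zs i) + (\<Sum>k<m. fst (snd t) k *\<^sub>R ls k) + (\<Sum>k<m. snd (snd t) k *\<^sub>R us k)"

lemma czne: "i < p \<Longrightarrow> cz i \<noteq> 0" using gd unfolding good_def cz_def by auto
lemma zzB: "i < p \<Longrightarrow> j < p \<Longrightarrow> B (zs i) (zs j) = (if i = j then cz j else 0)"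
  using gd unfolding good_def cz_def by auto
lemma llB: "i < m \<Longrightarrow> j < m \<Longrightarrow> B (ls i) (ls j) = 0" using gd unfolding good_def by auto
lemma uuB: "i < m \<Longrightarrow> j < m \<Longrightarrow> B (us i) (us j) = 0" using gd unfolding good_def by auto
lemma luB: "i < m \<Longrightarrow> j < m \<Longrightarrow> B (ls i) (us j) = (if i = j then 1 else 0)" using gd unfolding good_def by auto
lemma ulB: "i < m \<Longrightarrow> j < m \<Longrightarrow> B (us i) (ls j) = (if i = j then 1 else 0)" using luB Bsym by metis
lemma zlB: "i < p \<Longrightarrow> k < m \<Longrightarrow> B (zs i) (ls k) = 0" "i < p \<Longrightarrow> k < m \<Longrightarrow> B (ls k) (zs i) = 0"
  using gd Bsym unfolding good_def by metis+
lemma zuB: "i < p \<Longrightarrow> k < m \<Longrightarrow> B (zs i) (us k) = 0" "i < p \<Longrightarrow> k < m \<Longrightarrow> B (us k) (zs i) = 0"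
  using gd Bsym unfolding good_def by metis+
lemma zcen: "i < p \<Longrightarrow> cen (zs i)" using gd unfolding good_def by auto
lemma lcen: "k < m \<Longrightarrow> cen (ls k)" using gd unfolding good_def by auto

lemma K1: "j < p \<Longrightarrow> B (psi t) (zs j) = fst t j * cz j"
proof -
  assume j: "j < p"
  have "(\<Sum>i<p. fst t i * B (zs i) (zs j)) = fst t j * B (zs j) (zs j)"
    by (rule sum_single) (use j zzB in auto)
  moreover have "(\<Sum>k<m. fst (snd t) k * B (ls k) (zs j)) = 0" by (rule sum.neutral) (use j zlB in auto)
  moreover have "(\<Sum>k<m. snd (snd t) k * B (us k) (zs j)) = 0" by (rule sum.neutral) (use j zuB in auto)
  ultimately show ?thesis unfolding psi_def cz_def by (simp add: Bs Bsuml)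
qed

lemma K2: "j < m \<Longrightarrow> B (psi t) (us j) = fst (snd t) j"
proof -
  assume j: "j < m"
  have "(\<Sum>k<m. fst (snd t) k * B (ls k) (us j)) = fst (snd t) j * B (ls j) (us j)"
    by (rule sum_single) (use j luB in auto)
  moreover have "(\<Sum>i<p. fst t i * B (zs i) (us j)) = 0" by (rule sum.neutral) (use j zuB in auto)
  moreover have "(\<Sum>k<m. snd (snd t) k * B (us k) (us j)) = 0" by (rule sum.neutral) (use j uuB in auto)
  ultimately show ?thesis unfolding psi_def using luB[OF j j] by (simp add: Bs Bsuml)
qed

lemma K3: "j < m \<Longrightarrow> B (psi t) (ls j) = snd (snd t) j"
proof -
  assume j: "j < m"
  have "(\<Sum>k<m. snd (snd t) k * B (us k) (ls j)) = snd (snd t) j * B (us j) (ls j)"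
    by (rule sum_single) (use j ulB in auto)
  moreover have "(\<Sum>i<p. fst t i * B (zs i) (ls j)) = 0" by (rule sum.neutral) (use j zlB in auto)
  moreover have "(\<Sum>k<m. fst (snd t) k * B (ls k) (ls j)) = 0" by (rule sum.neutral) (use j llB in auto)
  ultimately show ?thesis unfolding psi_def using ulB[OF j j] by (simp add: Bs Bsuml)
qed

lemma psi_phi: "psi (phi x) = x"
proof -
  define d where "d = x - psi (phi x)"
  have g: "B s d = 0" if "s \<in> gens p zs m ls us" for s
  proof -
    from that consider (z) i where "i < p" "s = zs i" | (l) k where "k < m" "s = ls k"
      | (u) k where "k < m" "s = us k" unfolding gens_def by auto
    then show ?thesis
    proof cases
      case z then show ?thesis unfolding d_def using K1[of i "phi x"] czne[of i]
        by (simp add: Bs phi_def Bsym[of "zs i"])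
    next
      case l then show ?thesis unfolding d_def using K3[of k "phi x"]
        by (simp add: Bs phi_def Bsym[of "ls k"])
    next
      case u then show ?thesis unfolding d_def using K2[of k "phi x"]
        by (simp add: Bs phi_def Bsym[of "us k"])
    qed
  qed
  have "\<forall>y. B d y = 0"
  proof
    fix y
    have "B y d = 0" by (rule orth_span[OF g]) (use sp in auto)
    then show "B d y = 0" using Bsym by metis
  qed
  then have "d = 0" by (rule Bnd)
  then show ?thesis unfolding d_def by simp
qed

lemma phi_psi: "t \<in> tcarrier p m \<Longrightarrow> phi (psi t) = t"
proof -
  assume t: "t \<in> tcarrier p m"
  obtain a b c where abc: "t = (a, b, c)" by (cases t) auto
  have "a \<in> vec_on p" "b \<in> vec_on m" "c \<in> vec_on m" using t abc unfolding tcarrier_def by auto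
  then have "a i = 0" if "i \<ge> p" for i using that unfolding vec_on_def by auto
  moreover have "b i = 0" "c i = 0" if "i \<ge> m" for i
    using that \<open>b \<in> vec_on m\<close> \<open>c \<in> vec_on m\<close> unfolding vec_on_def by auto
  ultimately show ?thesis unfolding phi_def using K1[of _ t] K2[of _ t] K3[of _ t] czne abc
    by (auto intro!: ext simp: not_less)
qed

lemma phi_car: "phi x \<in> tcarrier p m"
  unfolding phi_def tcarrier_def vec_on_def by auto

lemma bij: "bij_betw phi UNIV (tcarrier p m)"
  by (rule bij_betw_byWitness[where f'=psi]) (use psi_phi phi_psi phi_car in auto)

lemma lin: "tlinear phi"
  unfolding tlinear_def phi_def
  by (auto intro!: linearI simp: Bs add_divide_distrib)

lemma sum_lt_cong: "(\<And>i. i < n \<Longrightarrow> f i = g i) \<Longrightarrow> sum f {..<n} = sum g {..<n}"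
  by (rule sum.cong) auto

definition Sm where "Sm i j = (if i = j \<and> i < p then cz i else 0)"
definition Cm where "Cm i j k = (if i < m \<and> j < m \<and> k < m then B (br (us i) (us j)) (us k) else 0)"
definition Uc where "Uc x = (\<Sum>k<m. B x (ls k) *\<^sub>R us k)"

lemma cen_rest: "cen (x - Uc x)"
proof -
  have "x = psi (phi x)" by (simp add: psi_phi)
  also have "\<dots> = (\<Sum>i<p. (if i < p then B x (zs i) / cz i else 0) *\<^sub>R zs i)
     + (\<Sum>k<m. (if k < m then B x (us k) else 0) *\<^sub>R ls k) + Uc x"
    unfolding psi_def phi_def Uc_def by (simp cong: sum_lt_cong)
  finally have e: "x - Uc x = (\<Sum>i<p. (if i < p then B x (zs i) / cz i else 0) *\<^sub>R zs i)
     + (\<Sum>k<m. (if k < m then B x (us k) else 0) *\<^sub>R ls k)" by (simp add: algebra_simps)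
  have "(\<Sum>i<p. (if i < p then B x (zs i) / cz i else 0) *\<^sub>R zs i) \<in> Collect cen"
    by (intro subspace_sum[OF subspace_cen] subspace_scale[OF subspace_cen]) (use zcen in auto)
  moreover have "(\<Sum>k<m. (if k < m then B x (us k) else 0) *\<^sub>R ls k) \<in> Collect cen"
    by (intro subspace_sum[OF subspace_cen] subspace_scale[OF subspace_cen]) (use lcen in auto)
  ultimately show ?thesis unfolding e using subspace_add[OF subspace_cen] by blast
qed

lemma br_U: "br x y = br (Uc x) (Uc y)"
proof -
  have "br x y = br (Uc x + (x - Uc x)) y" by simp
  also have "\<dots> = br (Uc x) y" using cenD(2)[OF cen_rest] by (simp add: brs)
  also have "\<dots> = br (Uc x) (Uc y + (y - Uc y))" by simp
  also have "\<dots> = br (Uc x) (Uc y)" using cenD(1)[OF cen_rest] by (simp add: brs)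
  finally show ?thesis .
qed

lemma key: "k < m \<Longrightarrow> B (br x y) (us k) = (\<Sum>i<m. \<Sum>j<m. Cm i j k * B x (ls i) * B y (ls j))"
proof -
  assume k: "k < m"
  have "B (br x y) (us k) = B (br (Uc x) (Uc y)) (us k)" by (subst br_U) simp
  also have "\<dots> = (\<Sum>(i,j)\<in>{..<m}\<times>{..<m}. B (br (B x (ls i) *\<^sub>R us i) (B y (ls j) *\<^sub>R us j)) (us k))"
    unfolding Uc_def bilinear_sum[OF brb] Bsuml by (rule sum.cong) auto
  also have "\<dots> = (\<Sum>i<m. \<Sum>j<m. Cm i j k * B x (ls i) * B y (ls j))"
    unfolding sum.cartesian_product by (rule sum.cong) (auto simp: Cm_def brs Bs k)
  finally show ?thesis .
qed

lemma omega_k: "k < m \<Longrightarrow> omegaF m Cm (\<lambda>k. if k < m then B x (ls k) else 0) (\<lambda>k. if k < m then B y (ls k) else 0) k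
   = (\<Sum>i<m. \<Sum>j<m. Cm i j k * B x (ls i) * B y (ls j))"
proof -
  assume k: "k < m"
  have "(\<Sum>k'<m. Cm i j k' * a * b * (if k' = k then 1 else 0)) = Cm i j k * a * b" for i j a b
    by (subst sum_single[of _ k]) (use k in auto)
  then show ?thesis unfolding omegaF_def three_form_def using k by (simp cong: sum_lt_cong)
qed

lemma omega_out: "\<not> k < m \<Longrightarrow> omegaF m C u v k = 0" by (simp add: omegaF_def)

lemma bracket: "phi (br x y) = tbracket m Cm (phi x) (phi y)"
proof -
  have a: "B (br x y) (zs i) = 0" if "i < p" for i using inv[of x y "zs i"] cenD(1)[OF zcen[OF that]] by (simp add: Bs)
  have b: "B (br x y) (ls i) = 0" if "i < m" for i using inv[of x y "ls i"] cenD(1)[OF lcen[OF that]] by (simp add: Bs)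
  show ?thesis unfolding tbracket_def
    by (simp add: phi_def a b) (auto intro!: ext simp: key omega_k a b omega_out)
qed

lemma form: "B x y = tform p m Sm (phi x) (phi y)"
proof -
  have e1: "sform p Sm (\<lambda>i. if i < p then B x (zs i) / cz i else 0) (\<lambda>i. if i < p then B y (zs i) / cz i else 0)
     = (\<Sum>i<p. (B x (zs i) / cz i) * B (zs i) y)"
    unfolding sform_def
  proof (rule sum.cong)
    fix i assume i: "i \<in> {..<p}"
    have "(\<Sum>j<p. Sm i j * (if i < p then B x (zs i) / cz i else 0) * (if j < p then B y (zs j) / cz j else 0))
       = Sm i i * (if i < p then B x (zs i) / cz i else 0) * (if i < p then B y (zs i) / cz i else 0)"
      by (rule sum_single) (use i in \<open>auto simp: Sm_def\<close>)
    also have "\<dots> = (B x (zs i) / cz i) * B (zs i) y" using i czne[of i] by (simp add: Sm_def Bsym[of "zs i" y] field_simps)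
    finally show "(\<Sum>j<p. Sm i j * (if i < p then B x (zs i) / cz i else 0) * (if j < p then B y (zs j) / cz j else 0))
       = (B x (zs i) / cz i) * B (zs i) y" .
  qed simp
  have "B x y = B (psi (phi x)) y" by (simp add: psi_phi)
  also have "\<dots> = (\<Sum>i<p. (B x (zs i) / cz i) * B (zs i) y) + (\<Sum>k<m. B x (us k) * B (ls k) y)
     + (\<Sum>k<m. B x (ls k) * B (us k) y)"
    unfolding psi_def phi_def by (simp add: Bs Bsuml cong: sum_lt_cong)
  also have "\<dots> = tform p m Sm (phi x) (phi y)"
    unfolding tform_def phi_def using e1
    by (simp add: sum.distrib Bsym[of "ls _" y] Bsym[of "us _" y] mult.commute cong: sum_lt_cong)
  finally show ?thesis .
qed

lemma vz: "valid_zform p Sm"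
  unfolding valid_zform_def
proof (intro conjI allI ballI impI)
  show "Sm i j = Sm j i" for i j unfolding Sm_def by auto
  fix v assume v: "v \<in> vec_on p" and h: "\<forall>w\<in>vec_on p. sform p Sm v w = 0"
  show "v = (\<lambda>_. 0)"
  proof
    fix i show "v i = 0"
    proof (cases "i < p")
      case True
      let ?w = "\<lambda>j. if j = i then 1 else (0::real)"
      have "?w \<in> vec_on p" using True unfolding vec_on_def by auto
      then have "sform p Sm v ?w = 0" using h by blast
      moreover have "sform p Sm v ?w = cz i * v i"
      proof -
        have "sform p Sm v ?w = (\<Sum>a<p. Sm a i * v a)" unfolding sform_def
          by (rule sum.cong) (auto simp: sum_single[of _ i] True)
        also have "\<dots> = Sm i i * v i" by (rule sum_single) (auto simp: Sm_def True)
        finally show ?thesis using True by (simp add: Sm_def)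
      qed
      ultimately show ?thesis using czne[OF True] by simp
    next
      case False then show ?thesis using v unfolding vec_on_def by auto
    qed
  qed
qed

lemma alt3: "alternating3 Cm"
  unfolding alternating3_def Cm_def
proof (intro allI conjI)
  fix i j k
  show "(if i < m \<and> j < m \<and> k < m then B (br (us i) (us j)) (us k) else 0) =
        - (if j < m \<and> i < m \<and> k < m then B (br (us j) (us i)) (us k) else 0)"
    using antisym[of "us i" "us j"] by (auto simp: Bs)
  show "(if i < m \<and> j < m \<and> k < m then B (br (us i) (us j)) (us k) else 0) =
        - (if i < m \<and> k < m \<and> j < m then B (br (us i) (us k)) (us j) else 0)"
    using inv[of "us i" "us j" "us k"] Bsym[of "us j" "br (us i) (us k)"] by auto
qed

lemma result: "\<exists>p m S C \<phi>. valid_zform p S \<and> alternating3 C \<and> metric_lie_iso br B p m S C \<phi>"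
  using vz alt3 lin bij bracket form unfolding metric_lie_iso_def by blast

end



theorem mainTheorem17:
  fixes br :: "'g::euclidean_space \<Rightarrow> 'g \<Rightarrow> 'g" and B :: "'g \<Rightarrow> 'g \<Rightarrow> real"
  assumes "lie_algebra br"
    and "nondeg_sym_form B"
    and "ad_invariant br B"
    and "flat br"
  shows "\<exists>p m S C \<phi>. valid_zform p S \<and> alternating3 C \<and> metric_lie_iso br B p m S C \<phi>"
proof -
  have brb: "bilinear br" and alt: "\<And>x. br x x = 0"
    and jac: "\<And>x y z. br x (br y z) + br y (br z x) + br z (br x y) = 0"
    using assms(1) unfolding lie_algebra_def by auto
  have Bb: "bilinear B" and Bsym: "\<And>x y. B x y = B y x" and Bnd: "\<And>x. (\<forall>y. B x y = 0) \<Longrightarrow> x = 0"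
    using assms(2) unfolding nondeg_sym_form_def by auto
  have inv: "\<And>x y z. B (br x y) z = - B y (br x z)" using assms(3) unfolding ad_invariant_def by auto
  have as: "\<And>a b. br a b = - br b a" using antisym0[OF brb alt] .
  have nil2: "br (br x y) z = 0" for x y z
  proof -
    have e1: "br y (br z x) = - br y (br x z)" by (subst as[of z x]) (simp add: bilinear_rneg[OF brb])
    have e2: "br z (br x y) = - br (br x y) z" by (rule as)
    have J: "br x (br y z) - br y (br x z) = br (br x y) z"
      using jac[of x y z] unfolding e1 e2 by (simp add: algebra_simps)
    define w where "w = br (br x y) z"
    have "curvature br x y z = (1/4) *\<^sub>R (br x (br y z) - br y (br x z)) - (1/2) *\<^sub>R br (br x y) z"
      unfolding curvature_def half_conn_def by (simp add: bilinear_rmul[OF brb] scaleR_diff_right)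
    also have "\<dots> = (1/4::real) *\<^sub>R w - (1/2) *\<^sub>R w" unfolding J w_def ..
    also have "\<dots> = (1/4 - 1/2::real) *\<^sub>R w" by (rule scaleR_left_diff_distrib[symmetric])
    finally have "(1/4 - 1/2::real) *\<^sub>R w = 0" using assms(4) unfolding flat_def by simp
    then show ?thesis unfolding w_def by simp
  qed
  interpret mla br B
    apply unfold_locales
    apply (rule brb) apply (rule alt) apply (rule Bb) apply (rule Bsym) apply (erule Bnd)
    apply (rule inv) apply (rule nil2) done
  obtain p zs m ls us where "good p zs m ls us" "span (gens p zs m ls us) = UNIV"
    using basis_exists by blast
  then interpret mlab br B p zs m ls us by unfold_locales
  show ?thesis by (rule result)
qed

end
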